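(* Let $G$ be a connected weighted multigraph on the vertex set $V$, $|V|\ge2$, with positive edge weights, and let $\tilde G$ be any balance-graph of $G$. Then for all $i,j\in V$ the resistance distance between $i$ and $j$ in $G$ equals the long walk distance $d^{LW}(i,j)$ computed in $\tilde G$.
   Context: Loops and multiple edges are allowed. The weighted adjacency matrix $A(H)=(a_{ij})$ of a graph $H$ has $a_{ij}$ equal to the sum of weights of the edges joining $i$ and $j$; its Laplacian is $L(H)=\operatorname{diag}(A(H)\mathbf 1)-A(H)$. The resistance distance in $G$ is $d^r(i,j)=(e_i-e_j)^{\mathsf T}L(G)^{+}(e_i-e_j)$, where $L^+$ is the Moore–Penrose inverse and $e_i$ the standard basis vectors (equivalently, the effective resistance when each edge is a resistor of conductance equal to its weight). A balance-graph of $G$ is a graph $\tilde G$ with the same vertices, containing the edges of $G$ with the same weights, whose additional edges are all loops with positive weights, and whose weighted adjacency matrix has constant row sums. For a connected graph $H$ on $n$ vertices with adjacency matrix $B$ and spectral radius $\rho$, the long walk distance is $d^{LW}(i,j)=\lim_{\alpha\to\infty}\theta\bigl(\tfrac12(\ln r_{ii}+\ln r_{jj})-\ln r_{ij}\bigr)$, where $(r_{ij})=(I-tB)^{-1}$, $t=(\rho+\alpha^{-1})^{-1}$, and $\theta=\ln(e+\alpha^{2/n})\frac{\alpha-1}{\ln\alpha}$. *)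

theory Defs
  imports "HOL-Analysis.Analysis"
begin

text \<open>A weighted multigraph on the vertex type 'n (vertex set V = UNIV, finite):
  a finite set of edges E, an endpoint map (ends e = {i,j}; a loop at i has ends e = {i}),
  and an edge weight function w.\<close>

definition wmultigraph :: "'e set \<Rightarrow> ('e \<Rightarrow> 'n set) \<Rightarrow> ('e \<Rightarrow> real) \<Rightarrow> bool" where
  "wmultigraph E ends w \<longleftrightarrow> finite E \<and>
     (\<forall>e\<in>E. ends e \<noteq> {} \<and> card (ends e) \<le> 2) \<and> (\<forall>e\<in>E. w e > 0)"

definition wadj :: "'e set \<Rightarrow> ('e \<Rightarrow> 'n::finite set) \<Rightarrow> ('e \<Rightarrow> real) \<Rightarrow> real^'n^'n" where
  "wadj E ends w = (\<chi> i j. \<Sum>e\<in>{e\<in>E. ends e = {i, j}}. w e)"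

definition laplacian :: "real^'n^'n \<Rightarrow> real^'n^'n" where
  "laplacian A = (\<chi> i j. (if i = j then (\<Sum>k\<in>UNIV. A $ i $ k) else 0) - A $ i $ j)"

definition wconnected :: "'e set \<Rightarrow> ('e \<Rightarrow> 'n set) \<Rightarrow> bool" where
  "wconnected E ends \<longleftrightarrow>
     (\<forall>i j. (\<lambda>x y. \<exists>e\<in>E. ends e = {x, y})\<^sup>*\<^sup>* i j)"

definition mp_inverse :: "real^'n^'n \<Rightarrow> real^'n^'n" where
  "mp_inverse A = (THE X. A ** X ** A = A \<and> X ** A ** X = X \<and>
       transpose (A ** X) = A ** X \<and> transpose (X ** A) = X ** A)"

definition resistance_distance :: "real^'n^'n \<Rightarrow> 'n \<Rightarrow> 'n \<Rightarrow> real" where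
  "resistance_distance A i j =
     (axis i 1 - axis j 1) \<bullet> (mp_inverse (laplacian A) *v (axis i 1 - axis j 1))"

definition balance_graph ::
  "'e set \<Rightarrow> ('e \<Rightarrow> 'n::finite set) \<Rightarrow> ('e \<Rightarrow> real) \<Rightarrow>
   'e set \<Rightarrow> ('e \<Rightarrow> 'n set) \<Rightarrow> ('e \<Rightarrow> real) \<Rightarrow> bool" where
  "balance_graph E ends w E' ends' w' \<longleftrightarrow>
     wmultigraph E' ends' w' \<and> E \<subseteq> E' \<and>
     (\<forall>e\<in>E. ends' e = ends e \<and> w' e = w e) \<and>
     (\<forall>e\<in>E' - E. (\<exists>i. ends' e = {i}) \<and> w' e > 0) \<and>
     (\<exists>c. \<forall>i. (\<Sum>j\<in>UNIV. wadj E' ends' w' $ i $ j) = c)"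

definition spectral_radius :: "real^'n^'n \<Rightarrow> real" where
  "spectral_radius B = Max {cmod z | z. det (mat z - (\<chi> i j. complex_of_real (B $ i $ j))) = 0}"

definition lw_theta :: "nat \<Rightarrow> real \<Rightarrow> real" where
  "lw_theta n \<alpha> = ln (exp 1 + \<alpha> powr (2 / real n)) * (\<alpha> - 1) / ln \<alpha>"

definition lw_R :: "real^'n^'n \<Rightarrow> real \<Rightarrow> real^'n^'n" where
  "lw_R B \<alpha> = matrix_inv (mat 1 - (1 / (spectral_radius B + 1 / \<alpha>)) *\<^sub>R B)"

text \<open>Long walk distance as a limit (the statement "d^LW(i,j) = d" means the limit exists and is d).\<close>
definition has_long_walk_distance :: "real^'n^'n \<Rightarrow> 'n \<Rightarrow> 'n \<Rightarrow> real \<Rightarrow> bool" where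
  "has_long_walk_distance B i j d \<longleftrightarrow>
     ((\<lambda>\<alpha>. lw_theta CARD('n) \<alpha> *
        ((ln (lw_R B \<alpha> $ i $ i) + ln (lw_R B \<alpha> $ j $ j)) / 2 - ln (lw_R B \<alpha> $ i $ j)))
      \<longlongrightarrow> d) at_top"

end

theory Submission imports Defs "HOL-Computational_Algebra.Polynomial" begin

lemma inv_props: "invertible A \<Longrightarrow> A ** matrix_inv A = mat 1 \<and> matrix_inv A ** A = mat 1"
  unfolding invertible_def matrix_inv_def by (rule someI_ex)

lemma inv_unique: fixes A :: "'a::field^'n^'n" assumes "A ** X = mat 1" shows "matrix_inv A = X"
proof -
  have XA: "X ** A = mat 1" using assms matrix_left_right_inverse by blast
  hence "invertible A" using assms invertible_def by blast
  then have h: "matrix_inv A ** A = mat 1" using inv_props by blast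
  have "matrix_inv A = matrix_inv A ** (A ** X)" using assms by simp
  also have "\<dots> = X" by (simp add: matrix_mul_assoc h)
  finally show ?thesis .
qed

lemma mp_unique:
  fixes A X Z :: "real^'n^'n"
  assumes x1: "A ** X ** A = A" and x2: "X ** A ** X = X"
    and x3: "transpose (A ** X) = A ** X" and x4: "transpose (X ** A) = X ** A"
    and y1: "A ** Z ** A = A" and y2: "Z ** A ** Z = Z"
    and y3: "transpose (A ** Z) = A ** Z" and y4: "transpose (Z ** A) = Z ** A"
  shows "X = Z"
proof -
  have tA1: "transpose A = transpose A ** (A ** Z)"
  proof -
    have "transpose A = transpose ((A ** Z) ** A)" using y1 by simp
    also have "\<dots> = transpose A ** transpose (A ** Z)" by (rule matrix_transpose_mul)
    also have "\<dots> = transpose A ** (A ** Z)" by (simp only: y3)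
    finally show ?thesis .
  qed
  have tA2: "transpose A = (X ** A) ** transpose A"
  proof -
    have "transpose A = transpose (A ** (X ** A))" using x1 by (simp add: matrix_mul_assoc)
    also have "\<dots> = transpose (X ** A) ** transpose A" by (rule matrix_transpose_mul)
    also have "\<dots> = (X ** A) ** transpose A" by (simp only: x4)
    finally show ?thesis .
  qed
  have "X = X ** (A ** X)" using x2 by (simp add: matrix_mul_assoc)
  also have "\<dots> = X ** transpose (A ** X)" using x3 by simp
  also have "\<dots> = X ** (transpose X ** transpose A)" by (simp add: matrix_transpose_mul)
  also have "\<dots> = X ** (transpose X ** (transpose A ** (A ** Z)))" using tA1 by simp
  also have "\<dots> = X ** (transpose (A ** X) ** (A ** Z))" by (simp add: matrix_transpose_mul matrix_mul_assoc)
  also have "\<dots> = (X ** A ** X) ** A ** Z" using x3 by (simp add: matrix_mul_assoc)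
  also have "\<dots> = X ** A ** Z" using x2 by simp
  finally have hX: "X = X ** A ** Z" .
  have "Z = (Z ** A) ** Z" using y2 by simp
  also have "\<dots> = transpose (Z ** A) ** Z" using y4 by simp
  also have "\<dots> = (transpose A ** transpose Z) ** Z" by (simp add: matrix_transpose_mul)
  also have "\<dots> = (((X ** A) ** transpose A) ** transpose Z) ** Z" using tA2 by simp
  also have "\<dots> = (X ** A) ** (transpose (Z ** A)) ** Z" by (simp add: matrix_transpose_mul matrix_mul_assoc)
  also have "\<dots> = X ** A ** (Z ** A ** Z)" using y4 by (simp add: matrix_mul_assoc)
  also have "\<dots> = X ** A ** Z" using y2 by simp
  finally show ?thesis using hX by simp
qed

lemma ent: "((A::real^'n^'m) *v axis j 1) $ i = A$i$j"
proof -
  have "(A *v axis j 1) $ i = (\<Sum>k\<in>UNIV. A$i$k * (if k = j then 1 else 0))"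
    by (simp add: matrix_vector_mult_def axis_def)
  also have "\<dots> = (\<Sum>k\<in>UNIV. if k = j then A$i$k else 0)"
    by (rule sum.cong) auto
  finally have "(A *v axis j 1) $ i = (\<Sum>k\<in>UNIV. if k = j then A$i$k else 0)" .
  then show ?thesis by simp
qed

lemma ln_bounds: fixes u :: real assumes "u > -1"
  shows "u / (1 + u) \<le> ln (1 + u)" "ln (1 + u) \<le> u"
proof -
  show "ln (1 + u) \<le> u" using ln_le_minus_one[of "1+u"] assms by simp
  have "ln (1 / (1 + u)) \<le> 1 / (1 + u) - 1" using ln_le_minus_one[of "1/(1+u)"] assms by simp
  moreover have "ln (1 / (1 + u)) = - ln (1 + u)" using assms by (simp add: ln_div)
  moreover have "1 / (1 + u) - 1 = - (u / (1 + u))" using assms by (simp add: field_simps)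
  ultimately show "u / (1 + u) \<le> ln (1 + u)" by linarith
qed

lemma alpha_ln_lim:
  fixes f :: "real \<Rightarrow> real" and N a :: real
  assumes f: "(f \<longlongrightarrow> a) at_top"
  shows "((\<lambda>\<alpha>. \<alpha> * ln (1 + N * f \<alpha> / \<alpha>)) \<longlongrightarrow> N * a) at_top"
proof -
  define u where "u \<alpha> = N * f \<alpha> / \<alpha>" for \<alpha>
  have u0: "(u \<longlongrightarrow> 0) at_top"
  proof -
    have "((\<lambda>\<alpha>. (N * f \<alpha>) * inverse \<alpha>) \<longlongrightarrow> (N * a) * 0) at_top"
      by (intro tendsto_intros f tendsto_inverse_0_at_top filterlim_ident)
    moreover have "u = (\<lambda>\<alpha>. (N * f \<alpha>) * inverse \<alpha>)" by (simp add: fun_eq_iff u_def divide_inverse)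
    ultimately show ?thesis by simp
  qed
  have ev1: "eventually (\<lambda>\<alpha>. u \<alpha> > -1) at_top"
    using order_tendstoD(1)[OF u0, of "-1"] by simp
  have lo: "((\<lambda>\<alpha>. N * f \<alpha> / (1 + u \<alpha>)) \<longlongrightarrow> N * a / (1 + 0)) at_top"
    by (intro tendsto_intros f u0) simp
  have hi: "((\<lambda>\<alpha>. N * f \<alpha>) \<longlongrightarrow> N * a) at_top"
    by (intro tendsto_intros f)
  show ?thesis
  proof (rule tendsto_sandwich[OF _ _ lo[simplified] hi])
    show "eventually (\<lambda>\<alpha>. N * f \<alpha> / (1 + u \<alpha>) \<le> \<alpha> * ln (1 + N * f \<alpha> / \<alpha>)) at_top"
      using ev1 eventually_gt_at_top[of 0]
    proof eventually_elim
      case (elim \<alpha>)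
      have "u \<alpha> / (1 + u \<alpha>) \<le> ln (1 + u \<alpha>)" using ln_bounds(1) elim by blast
      then have "\<alpha> * (u \<alpha> / (1 + u \<alpha>)) \<le> \<alpha> * ln (1 + u \<alpha>)" using elim by (intro mult_left_mono) auto
      moreover have "\<alpha> * (u \<alpha> / (1 + u \<alpha>)) = N * f \<alpha> / (1 + u \<alpha>)" using elim by (simp add: u_def)
      ultimately show ?case by (simp add: u_def)
    qed
    show "eventually (\<lambda>\<alpha>. \<alpha> * ln (1 + N * f \<alpha> / \<alpha>) \<le> N * f \<alpha>) at_top"
      using ev1 eventually_gt_at_top[of 0]
    proof eventually_elim
      case (elim \<alpha>)
      have "ln (1 + u \<alpha>) \<le> u \<alpha>" using ln_bounds(2) elim by blast
      then have "\<alpha> * ln (1 + u \<alpha>) \<le> \<alpha> * u \<alpha>" using elim by simp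
      moreover have "\<alpha> * u \<alpha> = N * f \<alpha>" using elim by (simp add: u_def)
      ultimately show ?case by (simp add: u_def)
    qed
  qed
qed

lemma theta_lim:
  assumes n: "n \<ge> 1"
  shows "((\<lambda>\<alpha>. lw_theta n \<alpha> / \<alpha>) \<longlongrightarrow> 2 / real n) at_top"
proof -
  define p where "p = 2 / real n"
  have p: "p > 0" using n by (simp add: p_def)
  have l1: "((\<lambda>\<alpha>. \<alpha> powr (-p)) \<longlongrightarrow> 0) at_top"
    using p by (intro tendsto_neg_powr filterlim_ident) auto
  have l2: "((\<lambda>\<alpha>. (p + ln (1 + exp 1 * \<alpha> powr (-p)) * inverse (ln \<alpha>)) * (1 - inverse \<alpha>))
       \<longlongrightarrow> (p + ln (1 + exp 1 * 0) * 0) * (1 - 0)) at_top"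
    by (intro tendsto_intros l1 tendsto_inverse_0_at_top filterlim_ident ln_at_top) simp
  have ev: "eventually (\<lambda>\<alpha>. (p + ln (1 + exp 1 * \<alpha> powr (-p)) * inverse (ln \<alpha>)) * (1 - inverse \<alpha>)
      = lw_theta n \<alpha> / \<alpha>) at_top"
    using eventually_gt_at_top[of 1]
  proof eventually_elim
    case (elim \<alpha>)
    have a0: "\<alpha> > 0" using elim by simp
    have lnp: "ln \<alpha> > 0" using elim by simp
    have "\<alpha> powr p * \<alpha> powr (-p) = 1" using a0 by (simp add: powr_add[symmetric])
    then have "exp 1 + \<alpha> powr p = \<alpha> powr p * (1 + exp 1 * \<alpha> powr (-p))"
      by (simp add: algebra_simps)
    moreover have q: "1 + exp 1 * \<alpha> powr (-p) > 0" by (intro add_pos_nonneg) auto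
    ultimately have "ln (exp 1 + \<alpha> powr p) = ln (\<alpha> powr p) + ln (1 + exp 1 * \<alpha> powr (-p))"
      using a0 by (simp add: ln_mult)
    then have "ln (exp 1 + \<alpha> powr p) = p * ln \<alpha> + ln (1 + exp 1 * \<alpha> powr (-p))"
      by simp
    then show ?case using a0 lnp
      by (simp add: lw_theta_def p_def field_simps)
  qed
  show ?thesis using Lim_transform_eventually[OF l2[simplified] ev] by (simp add: p_def)
qed

lemma ev_pos_lim:
  fixes f :: "real \<Rightarrow> real"
  assumes f: "(f \<longlongrightarrow> a) at_top"
  shows "eventually (\<lambda>\<alpha>. 1 + N * f \<alpha> / \<alpha> > 0) at_top"
proof -
  have "((\<lambda>\<alpha>. (N * f \<alpha>) * inverse \<alpha>) \<longlongrightarrow> (N * a) * 0) at_top"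
    by (intro tendsto_intros f tendsto_inverse_0_at_top filterlim_ident)
  then have "((\<lambda>\<alpha>. (N * f \<alpha>) * inverse \<alpha>) \<longlongrightarrow> 0) at_top" by simp
  then have "eventually (\<lambda>\<alpha>. (N * f \<alpha>) * inverse \<alpha> > -1) at_top"
    by (rule order_tendstoD(1)) simp
  then show ?thesis by eventually_elim (simp add: divide_inverse)
qed

lemma poly_det: "poly (det (Q :: complex poly^'n^'n)) z = det (\<chi> i j. poly (Q$i$j) z)"
  unfolding det_def by (simp add: poly_sum poly_prod)

lemma ker_of_det0: fixes A :: "'a::field^'n^'n" assumes "det A = 0" obtains v where "v \<noteq> 0" "A *v v = 0"
proof -
  have "\<not> inj ((*v) A)" using det_nz_iff_inj_gen[of "(*v) A"] assms by simp
  then obtain x y where "x \<noteq> y" "A *v x = A *v y" unfolding inj_def by blast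
  then show ?thesis using that[of "x - y"] by (simp add: matrix_vector_mult_diff_distrib)
qed

lemma det0_of_ker: fixes A :: "'a::field^'n^'n" assumes "v \<noteq> 0" "A *v v = 0" shows "det A = 0"
proof -
  have "A *v v = A *v 0" using assms by simp
  then have "\<not> inj ((*v) A)" using assms unfolding inj_def by blast
  then show ?thesis using det_nz_iff_inj_gen[of "(*v) A"] by simp
qed

locale balg =
  fixes B :: "real^'n::finite^'n" and c :: real
  assumes symB: "\<And>i j. B$i$j = B$j$i"
  and nonneg: "\<And>i j. B$i$j \<ge> 0"
  and rows: "\<And>i. (\<Sum>j\<in>UNIV. B$i$j) = c"
  and conn: "\<And>x i j. (\<And>i j. B$i$j > 0 \<Longrightarrow> x$i = x$j) \<Longrightarrow> (x::real^'n)$i = x$j"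
begin

definition "L = mat c - B"
definition "nn = real CARD('n)"
definition "P = ((\<chi> i j. 1 / nn) :: real^'n^'n)"
definition vs :: "real^'n \<Rightarrow> real" where "vs x = (\<Sum>i\<in>UNIV. x$i)"

lemma nn_pos: "nn > 0" by (simp add: nn_def)

lemma L_mult: "(L *v x)$i = (\<Sum>j\<in>UNIV. B$i$j * (x$i - x$j))"
proof -
  have "(L *v x)$i = (\<Sum>j\<in>UNIV. (if i = j then c else 0) * x$j) - (\<Sum>j\<in>UNIV. B$i$j * x$j)"
    by (simp add: L_def matrix_vector_mult_def mat_def left_diff_distrib sum_subtractf)
  also have "\<dots> = c * x$i - (\<Sum>j\<in>UNIV. B$i$j * x$j)"
  proof -
    have "(\<Sum>j\<in>UNIV. (if i = j then c else 0) * x$j) = (\<Sum>j\<in>UNIV. if i = j then c * x$j else 0)"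
      by (rule sum.cong) auto
    then show ?thesis by simp
  qed
  also have "c * x$i = (\<Sum>j\<in>UNIV. B$i$j * x$i)"
    by (simp add: rows sum_distrib_right[symmetric])
  finally show ?thesis by (simp add: right_diff_distrib sum_subtractf)
qed

lemma P_mult: "P *v x = (\<chi> i. vs x / nn)"
  by (simp add: P_def vs_def matrix_vector_mult_def sum_divide_distrib vec_eq_iff)

lemma vs_L: "vs (L *v x) = 0"
proof -
  have V: "vs (L *v x) = (\<Sum>i\<in>UNIV. \<Sum>j\<in>UNIV. B$i$j * (x$i - x$j))"
    by (simp add: vs_def L_mult)
  also have "\<dots> = (\<Sum>j\<in>UNIV. \<Sum>i\<in>UNIV. B$i$j * (x$i - x$j))" by (rule sum.swap)
  also have "\<dots> = - (\<Sum>j\<in>UNIV. \<Sum>i\<in>UNIV. B$j$i * (x$j - x$i))"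
    by (simp add: sum_negf[symmetric] symB algebra_simps)
  finally show ?thesis using V by linarith
qed

lemma quad: "x \<bullet> (L *v x) = (\<Sum>i\<in>UNIV. \<Sum>j\<in>UNIV. B$i$j * (x$i - x$j)^2) / 2"
proof -
  have S: "x \<bullet> (L *v x) = (\<Sum>i\<in>UNIV. \<Sum>j\<in>UNIV. B$i$j * x$i * (x$i - x$j))"
    by (simp add: inner_vec_def L_mult sum_distrib_left algebra_simps)
  also have "\<dots> = (\<Sum>j\<in>UNIV. \<Sum>i\<in>UNIV. B$i$j * x$i * (x$i - x$j))" by (rule sum.swap)
  also have "\<dots> = (\<Sum>i\<in>UNIV. \<Sum>j\<in>UNIV. B$i$j * x$j * (x$j - x$i))"
    by (simp add: symB)
  finally have S2: "x \<bullet> (L *v x) = (\<Sum>i\<in>UNIV. \<Sum>j\<in>UNIV. B$i$j * x$j * (x$j - x$i))" .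
  have "2 * (x \<bullet> (L *v x)) = (\<Sum>i\<in>UNIV. \<Sum>j\<in>UNIV. B$i$j * x$i * (x$i - x$j) + B$i$j * x$j * (x$j - x$i))"
    using S S2 by (simp add: sum.distrib)
  also have "\<dots> = (\<Sum>i\<in>UNIV. \<Sum>j\<in>UNIV. B$i$j * (x$i - x$j)^2)"
    by (intro sum.cong refl) (simp add: power2_eq_square algebra_simps)
  finally show ?thesis by simp
qed

lemma quad_nonneg: "x \<bullet> (L *v x) \<ge> 0"
  unfolding quad by (intro divide_nonneg_pos sum_nonneg mult_nonneg_nonneg nonneg) auto

lemma quad_zero: assumes "x \<bullet> (L *v x) = 0" shows "x$i = x$j"
proof (rule conn)
  fix a b assume ab: "B$a$b > 0"
  have "(\<Sum>i\<in>UNIV. \<Sum>j\<in>UNIV. B$i$j * (x$i - x$j)^2) = 0" using assms quad by simp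
  then have "\<forall>i\<in>UNIV. (\<Sum>j\<in>UNIV. B$i$j * (x$i - x$j)^2) = 0"
    by (subst (asm) sum_nonneg_eq_0_iff) (auto intro!: sum_nonneg mult_nonneg_nonneg nonneg)
  then have "\<forall>j\<in>UNIV. B$a$j * (x$a - x$j)^2 = 0"
    by (subst (asm) sum_nonneg_eq_0_iff) (auto intro!: sum_nonneg mult_nonneg_nonneg nonneg)
  then have "B$a$b * (x$a - x$b)^2 = 0" by auto
  with ab show "x$a = x$b" by simp
qed

lemma mat_mult: "mat e *v x = e *\<^sub>R (x::real^'n)"
proof -
  have "(mat e *v x)$i = e * x$i" for i
  proof -
    have "(mat e *v x)$i = (\<Sum>j\<in>UNIV. (if i = j then e else 0) * x$j)"
      by (simp add: matrix_vector_mult_def mat_def)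
    also have "\<dots> = (\<Sum>j\<in>UNIV. if i = j then e * x$j else 0)"
      by (rule sum.cong) auto
    finally have "(mat e *v x)$i = (\<Sum>j\<in>UNIV. if i = j then e * x$j else 0)" .
    then show ?thesis by simp
  qed
  then show ?thesis by (simp add: vec_eq_iff)
qed

lemma smv: "(k *\<^sub>R A) *v v = k *\<^sub>R (A *v (v::real^'n))" for A :: "real^'n^'n"
  by (simp add: scaleR_matrix_vector_assoc)

lemma vs_P: "vs (P *v x) = vs x"
  using nn_pos by (simp add: P_mult vs_def nn_def)

lemma vs_add: "vs (x + y) = vs x + vs y" by (simp add: vs_def sum.distrib)
lemma vs_scale: "vs (r *\<^sub>R x) = r * vs x" by (simp add: vs_def sum_distrib_left)

lemma L_one: "L *v 1 = 0" by (simp add: vec_eq_iff L_mult)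
lemma PL: "P *v (L *v x) = 0" by (simp add: P_mult vs_L vec_eq_iff)
lemma LP: "L *v (P *v x) = 0" by (simp add: P_mult vec_eq_iff L_mult)
lemma PP: "P *v (P *v x) = P *v x" by (simp add: P_mult vs_P[unfolded P_mult])

definition "Me e = L + P + mat e"

lemma Me_mult: "Me e *v x = L *v x + P *v x + e *\<^sub>R x"
  by (simp add: Me_def matrix_vector_mult_add_rdistrib mat_mult)

lemma Me_ker: assumes e: "e \<ge> 0" and x: "Me e *v x = 0" shows "x = 0"
proof -
  have "vs (Me e *v x) = 0" using x by (simp add: vs_def)
  then have "vs x + e * vs x = 0" by (simp add: Me_mult vs_add vs_scale vs_L vs_P)
  then have "(1 + e) * vs x = 0" by (simp add: algebra_simps)
  with e have vx: "vs x = 0" by simp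
  then have Px: "P *v x = 0" by (simp add: P_mult vec_eq_iff)
  then have "L *v x + e *\<^sub>R x = 0" using x by (simp add: Me_mult)
  then have "x \<bullet> (L *v x + e *\<^sub>R x) = 0" by simp
  then have s: "x \<bullet> (L *v x) + e * (x \<bullet> x) = 0" by (simp add: inner_add_right)
  have "e * (x \<bullet> x) \<ge> 0" using e by simp
  with s quad_nonneg[of x] have q: "x \<bullet> (L *v x) = 0" by linarith
  have "x$i = 0" for i
  proof -
    have h: "\<And>j. x$j = x$i" using quad_zero[OF q] by blast
    have "vs x = (\<Sum>j::'n\<in>UNIV. x$i)" unfolding vs_def using h by (intro sum.cong) auto
    then have "vs x = nn * x$i" by (simp add: nn_def)
    with vx nn_pos show "x$i = 0" by simp
  qed
  then show "x = 0" by (simp add: vec_eq_iff)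
qed

lemma Me_inv: assumes "e \<ge> 0" shows "invertible (Me e)"
proof -
  have "inj ((*v) (Me e))"
  proof (rule injI)
    fix x y assume "Me e *v x = Me e *v y"
    then have "Me e *v (x - y) = 0" by (simp add: matrix_vector_mult_diff_distrib)
    then show "x = y" using Me_ker[OF assms, of "x - y"] by simp
  qed
  then have "det (matrix ((*v) (Me e))) \<noteq> 0"
    using det_nz_iff_inj_gen[of "(*v) (Me e)"] by simp
  then show ?thesis by (simp add: invertible_det_nz)
qed

definition "Y e = matrix_inv (Me e)"

lemma Y_l: "e \<ge> 0 \<Longrightarrow> Y e *v (Me e *v v) = v"
  using inv_props[OF Me_inv] by (simp add: Y_def matrix_vector_mul_assoc)
lemma Y_r: "e \<ge> 0 \<Longrightarrow> Me e *v (Y e *v v) = v"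
  using inv_props[OF Me_inv] by (simp add: Y_def matrix_vector_mul_assoc)

lemma Me_P: "Me e *v (P *v x) = (1+e) *\<^sub>R (P *v x)"
  by (simp add: Me_mult LP PP algebra_simps)
lemma P_Me: "P *v (Me e *v x) = (1+e) *\<^sub>R (P *v x)"
  by (simp add: Me_mult PL PP algebra_simps)

lemma Y_P: assumes "e \<ge> 0" shows "Y e *v (P *v x) = (1/(1+e)) *\<^sub>R (P *v x)"
proof -
  have "P *v x = Y e *v (Me e *v (P *v x))" using Y_l[OF assms] by simp
  also have "\<dots> = (1+e) *\<^sub>R (Y e *v (P *v x))" by (simp add: Me_P matrix_vector_mult_scaleR)
  finally have "(1/(1+e)) *\<^sub>R (P *v x) = (1/(1+e)) *\<^sub>R ((1+e) *\<^sub>R (Y e *v (P *v x)))" by simp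
  then show ?thesis using assms by simp
qed

lemma P_Y: assumes "e \<ge> 0" shows "P *v (Y e *v x) = (1/(1+e)) *\<^sub>R (P *v x)"
proof -
  have "P *v x = P *v (Me e *v (Y e *v x))" using Y_r[OF assms] by simp
  also have "\<dots> = (1+e) *\<^sub>R (P *v (Y e *v x))" by (simp add: P_Me)
  finally show ?thesis using assms by simp
qed

definition "X e = (1/e) *\<^sub>R P + Y e - (1/(1+e)) *\<^sub>R P"

lemma KX: assumes e: "e > 0" shows "(L + mat e) ** X e = mat 1"
proof -
  have "(L + mat e) *v (X e *v v) = v" for v
  proof -
    define p where "p = P *v v"
    define y where "y = Y e *v v"
    have Xv: "X e *v v = (1/e) *\<^sub>R p + y - (1/(1+e)) *\<^sub>R p"
      by (simp add: X_def p_def y_def matrix_vector_mult_add_rdistrib matrix_vector_mult_diff_rdistrib smv)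
    have Lp: "L *v p = 0" by (simp add: p_def LP)
    have Ly: "L *v y = v - (1/(1+e)) *\<^sub>R p - e *\<^sub>R y"
    proof -
      have "v = Me e *v y" using Y_r e by (simp add: y_def)
      also have "\<dots> = L *v y + (1/(1+e)) *\<^sub>R p + e *\<^sub>R y"
        using e by (simp add: Me_mult y_def p_def P_Y)
      finally show ?thesis by (simp add: algebra_simps)
    qed
    have "(L + mat e) *v (X e *v v) = L *v (X e *v v) + e *\<^sub>R (X e *v v)"
      by (simp add: matrix_vector_mult_add_rdistrib mat_mult)
    also have "\<dots> = v + (1 - 1/(1+e) - e/(1+e)) *\<^sub>R p"
      using e by (simp add: Xv matrix_vector_right_distrib matrix_vector_mult_diff_distrib
          matrix_vector_mult_scaleR Lp Ly algebra_simps)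
    also have "1 - 1/(1+e) - e/(1+e) = 0" using e by (simp add: field_simps)
    finally show ?thesis by simp
  qed
  then show ?thesis by (simp add: matrix_eq matrix_vector_mul_assoc)
qed

definition "Lp = Y 0 - P"

lemma Me0: "Me 0 *v v = L *v v + P *v v" by (simp add: Me_mult)

lemma LLp_v: "L *v (Lp *v v) = v - P *v v"
proof -
  have "v = Me 0 *v (Y 0 *v v)" using Y_r by simp
  also have "\<dots> = L *v (Y 0 *v v) + P *v v" using P_Y[of 0] by (simp add: Me0)
  finally have "L *v (Y 0 *v v) = v - P *v v" by (metis add_diff_cancel_right')
  then show ?thesis by (simp add: Lp_def matrix_vector_mult_diff_rdistrib matrix_vector_mult_diff_distrib LP)
qed

lemma LpL_v: "Lp *v (L *v v) = v - P *v v"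
proof -
  have "L *v v = Me 0 *v v - P *v v" by (simp add: Me0)
  then have "Y 0 *v (L *v v) = v - P *v v"
    using Y_l[of 0] Y_P[of 0] by (simp add: matrix_vector_mult_diff_distrib)
  then show ?thesis by (simp add: Lp_def matrix_vector_mult_diff_rdistrib PL)
qed

lemma PLp_v: "P *v (Lp *v v) = 0"
  using P_Y[of 0] by (simp add: Lp_def matrix_vector_mult_diff_rdistrib matrix_vector_mult_diff_distrib PP)

lemma P_sym: "transpose P = P" by (simp add: P_def transpose_def)

lemma mp1: "L ** Lp ** L = L"
  by (simp add: matrix_eq matrix_vector_mul_assoc[symmetric] LLp_v matrix_vector_mult_diff_distrib PL)
lemma mp2: "Lp ** L ** Lp = Lp"
  by (simp add: matrix_eq matrix_vector_mul_assoc[symmetric] LpL_v matrix_vector_mult_diff_distrib PLp_v)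
lemma LLp: "L ** Lp = mat 1 - P"
  by (simp add: matrix_eq matrix_vector_mul_assoc[symmetric] LLp_v matrix_vector_mult_diff_rdistrib)
lemma LpL: "Lp ** L = mat 1 - P"
  by (simp add: matrix_eq matrix_vector_mul_assoc[symmetric] LpL_v matrix_vector_mult_diff_rdistrib)
lemma tr1P: "transpose (mat 1 - P) = mat 1 - P"
  by (simp add: vec_eq_iff transpose_def P_def mat_def)

lemma mp_Lp: "mp_inverse L = Lp"
  unfolding mp_inverse_def
proof (rule the_equality)
  show "L ** Lp ** L = L \<and> Lp ** L ** Lp = Lp \<and> transpose (L ** Lp) = L ** Lp \<and> transpose (Lp ** L) = Lp ** L"
    using mp1 mp2 LLp LpL tr1P by simp
  fix Z assume "L ** Z ** L = L \<and> Z ** L ** Z = Z \<and> transpose (L ** Z) = L ** Z \<and> transpose (Z ** L) = Z ** L"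
  then show "Z = Lp" using mp_unique[of L Lp Z] mp1 mp2 LLp LpL tr1P by simp
qed

lemma Me0_sym: "transpose (Me 0) = Me 0"
  by (simp add: vec_eq_iff transpose_def Me_def L_def P_def mat_def symB)

lemma Y0_sym: "Y 0 $ i $ j = Y 0 $ j $ i"
proof -
  have inv: "Me 0 ** Y 0 = mat 1" "Y 0 ** Me 0 = mat 1" using inv_props[OF Me_inv[of 0]] by (auto simp: Y_def)
  have "Me 0 ** transpose (Y 0) = mat 1"
    using arg_cong[OF inv(2), of transpose] by (simp add: matrix_transpose_mul Me0_sym)
  then have "matrix_inv (Me 0) = transpose (Y 0)" by (rule inv_unique)
  then have "Y 0 = transpose (Y 0)" by (simp add: Y_def)
  then show ?thesis by (metis transpose_def vec_lambda_beta)
qed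

lemma Lp_sym: "Lp $ i $ j = Lp $ j $ i"
  using Y0_sym by (simp add: Lp_def P_def)

lemma Y_bound: obtains m where "m > 0"
  "\<And>e v. 0 \<le> e \<Longrightarrow> e \<le> m/2 \<Longrightarrow> norm (Y e *v v - Y 0 *v v) \<le> 2 * e * norm v / m^2"
proof -
  have inj: "inj ((*v) (Me 0))"
  proof (rule injI)
    fix x y assume "Me 0 *v x = Me 0 *v y"
    then have "Me 0 *v (x - y) = 0" by (simp add: matrix_vector_mult_diff_distrib)
    then show "x = y" using Me_ker[of 0 "x - y"] by simp
  qed
  obtain m where m: "m > 0" "\<And>x. m * norm x \<le> norm (Me 0 *v x)"
    using linear_inj_bounded_below_pos[OF matrix_vector_mul_linear inj] by blast
  show ?thesis
  proof (rule that[OF m(1)])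
    fix e v assume e: "0 \<le> e" "e \<le> m/2"
    define y where "y = Y e *v v"
    have "Me e *v y = v" using Y_r[OF e(1)] by (simp add: y_def)
    then have My: "Me 0 *v y = v - e *\<^sub>R y" by (simp add: Me_mult algebra_simps)
    have "m * norm y \<le> norm v + e * norm y"
      using m(2)[of y] My norm_triangle_ineq4[of v "e *\<^sub>R y"] e(1) by simp
    moreover have "e * norm y \<le> m/2 * norm y" using e by (intro mult_right_mono) auto
    ultimately have ny: "norm y \<le> 2 * norm v / m" using m(1) by (simp add: field_simps)
    have "Me 0 *v (y - Y 0 *v v) = - e *\<^sub>R y"
      using My Y_r[of 0 v] by (simp add: matrix_vector_mult_diff_distrib)
    then have "m * norm (y - Y 0 *v v) \<le> e * norm y" using m(2)[of "y - Y 0 *v v"] e(1) by simp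
    also have "\<dots> \<le> e * (2 * norm v / m)" using ny e(1) by (intro mult_left_mono) auto
    finally have "norm (y - Y 0 *v v) \<le> e * (2 * norm v / m) / m" using m(1)
      by (simp add: pos_le_divide_eq mult.commute)
    moreover have "e * (2 * norm v / m) / m = 2 * e * norm v / m^2"
      by (simp add: power2_eq_square)
    ultimately show "norm (Y e *v v - Y 0 *v v) \<le> 2 * e * norm v / m^2"
      by (simp add: y_def)
  qed
qed

lemma Y_conv: "((\<lambda>\<alpha>. Y (1/\<alpha>) $ i $ j) \<longlongrightarrow> Y 0 $ i $ j) at_top"
proof -
  obtain m where m: "m > 0"
    "\<And>e v. 0 \<le> e \<Longrightarrow> e \<le> m/2 \<Longrightarrow> norm (Y e *v v - Y 0 *v v) \<le> 2 * e * norm v / m^2"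
    using Y_bound by blast
  have ev: "eventually (\<lambda>\<alpha>. norm (Y (1/\<alpha>) $ i $ j - Y 0 $ i $ j) \<le> 2 / m^2 * inverse \<alpha>) at_top"
    using eventually_ge_at_top[of "2/m"]
  proof eventually_elim
    case (elim \<alpha>)
    have "2/m > 0" using m(1) by simp
    then have ap: "\<alpha> > 0" using elim by linarith
    have "1/\<alpha> \<le> m/2" using elim m(1) ap by (simp add: field_simps)
    then have b: "norm (Y (1/\<alpha>) *v axis j 1 - Y 0 *v axis j 1) \<le> 2 * (1/\<alpha>) * 1 / m^2"
      using m(2)[of "1/\<alpha>" "axis j 1"] ap by simp
    have "norm (Y (1/\<alpha>) $ i $ j - Y 0 $ i $ j) = \<bar>(Y (1/\<alpha>) *v axis j 1 - Y 0 *v axis j 1) $ i\<bar>"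
      by (simp add: ent)
    also have "\<dots> \<le> norm (Y (1/\<alpha>) *v axis j 1 - Y 0 *v axis j 1)" by (rule component_le_norm_cart)
    moreover have "2 * (1/\<alpha>) * 1 / m^2 = 2/m^2 * inverse \<alpha>" by (simp add: divide_inverse)
    ultimately show ?case using b by linarith
  qed
  have "((\<lambda>\<alpha>. 2 / m^2 * inverse \<alpha>) \<longlongrightarrow> 0) at_top"
    by (intro tendsto_mult_right_zero tendsto_inverse_0_at_top filterlim_ident)
  then have "((\<lambda>\<alpha>. Y (1/\<alpha>) $ i $ j - Y 0 $ i $ j) \<longlongrightarrow> 0) at_top"
    by (rule Lim_null_comparison[OF ev])
  then show ?thesis by (simp add: LIM_zero_iff)
qed

lemma c_nonneg: "c \<ge> 0"
  using rows[of undefined] sum_nonneg[of UNIV "\<lambda>j. B$undefined$j"] nonneg by simp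

definition "F i j \<alpha> = Y (1/\<alpha>) $ i $ j - 1 / ((1 + 1/\<alpha>) * nn)"

lemma F_lim: "(F i j \<longlongrightarrow> Lp $ i $ j) at_top"
proof -
  have "((\<lambda>\<alpha>. Y (1/\<alpha>) $ i $ j - 1 / ((1 + inverse \<alpha>) * nn)) \<longlongrightarrow> Y 0 $ i $ j - 1 / ((1 + 0) * nn)) at_top"
    using nn_pos by (intro tendsto_intros Y_conv tendsto_inverse_0_at_top filterlim_ident) auto
  moreover have "F i j = (\<lambda>\<alpha>. Y (1/\<alpha>) $ i $ j - 1 / ((1 + inverse \<alpha>) * nn))"
    by (simp add: fun_eq_iff F_def divide_inverse)
  ultimately show ?thesis by (simp add: Lp_def P_def)
qed

lemma lwR_entry:
  assumes sr: "spectral_radius B = c" and a: "\<alpha> > 0"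
  shows "lw_R B \<alpha> $ i $ j = (c + 1/\<alpha>) * (\<alpha> / nn + F i j \<alpha>)"
proof -
  define e where "e = 1/\<alpha>"
  define t where "t = 1 / (c + e)"
  have e: "e > 0" using a by (simp add: e_def)
  have ce: "c + e > 0" using e c_nonneg by simp
  have t: "t > 0" using ce by (simp add: t_def)
  have M1: "mat 1 - t *\<^sub>R B = t *\<^sub>R (L + mat e)"
  proof -
    have "(mat 1 - t *\<^sub>R B) $ x $ y = (t *\<^sub>R (L + mat e)) $ x $ y" for x y
    proof (cases "x = y")
      case True
      have "t * (c + e) = 1" using ce by (simp add: t_def)
      then show ?thesis using True by (simp add: L_def mat_def algebra_simps)
    next
      case False
      then show ?thesis by (simp add: L_def mat_def)
    qed
    then show ?thesis by (simp add: vec_eq_iff)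
  qed
  have KXv: "(L + mat e) *v (X e *v v) = v" for v
    using KX[OF e] by (metis matrix_vector_mul_assoc matrix_vector_mul_lid)
  have "(t *\<^sub>R (L + mat e)) ** ((1/t) *\<^sub>R X e) = mat 1"
    using t by (simp add: matrix_eq matrix_vector_mul_assoc[symmetric] smv matrix_vector_mult_scaleR KXv)
  then have "lw_R B \<alpha> = (1/t) *\<^sub>R X e"
    unfolding lw_R_def sr using M1 e_def t_def by (simp add: inv_unique)
  then have "lw_R B \<alpha> $ i $ j = (c + e) * ((1/e) * (1/nn) + Y e $ i $ j - (1/(1+e)) * (1/nn))"
    by (simp add: X_def P_def t_def)
  then show ?thesis using a by (simp add: e_def F_def algebra_simps)
qed

lemma LW_main:
  assumes sr: "spectral_radius B = c"
  shows "has_long_walk_distance B i j (Lp$i$i + Lp$j$j - 2 * Lp$i$j)"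
proof -
  define G where "G x y \<alpha> = ln (1 + nn * F x y \<alpha> / \<alpha>)" for x y \<alpha>
  have card: "CARD('n) \<ge> 1" by (simp add: Suc_le_eq)
  have lnR: "ln (lw_R B \<alpha> $ x $ y) = ln (c + 1/\<alpha>) + ln (\<alpha> / nn) + G x y \<alpha>"
    if a: "\<alpha> > 0" and pos: "1 + nn * F x y \<alpha> / \<alpha> > 0" for \<alpha> x y
  proof -
    define A1 where "A1 = c + 1/\<alpha>"
    define A2 where "A2 = \<alpha> / nn"
    define A3 where "A3 = 1 + nn * F x y \<alpha> / \<alpha>"
    have "lw_R B \<alpha> $ x $ y = A1 * A2 * A3"
      using lwR_entry[OF sr a] a nn_pos by (simp add: A1_def A2_def A3_def field_simps)
    moreover have "A1 > 0" using a c_nonneg by (simp add: A1_def add_nonneg_pos)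
    moreover have "A2 > 0" using a nn_pos by (simp add: A2_def)
    moreover have "A3 > 0" using pos by (simp add: A3_def)
    ultimately have "ln (lw_R B \<alpha> $ x $ y) = ln A1 + ln A2 + ln A3" by (simp add: ln_mult)
    then show ?thesis by (simp add: A1_def A2_def A3_def G_def)
  qed
  have ev: "eventually (\<lambda>\<alpha>. (lw_theta CARD('n) \<alpha> / \<alpha>) *
        ((\<alpha> * G i i \<alpha> + \<alpha> * G j j \<alpha>) / 2 - \<alpha> * G i j \<alpha>) =
      lw_theta CARD('n) \<alpha> *
        ((ln (lw_R B \<alpha> $ i $ i) + ln (lw_R B \<alpha> $ j $ j)) / 2 - ln (lw_R B \<alpha> $ i $ j))) at_top"
    using eventually_gt_at_top[of 0] ev_pos_lim[OF F_lim[of i i], of nn]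
      ev_pos_lim[OF F_lim[of j j], of nn] ev_pos_lim[OF F_lim[of i j], of nn]
  proof eventually_elim
    case (elim \<alpha>)
    then show ?case by (simp add: lnR field_simps)
  qed
  have lim: "((\<lambda>\<alpha>. (lw_theta CARD('n) \<alpha> / \<alpha>) *
        ((\<alpha> * G i i \<alpha> + \<alpha> * G j j \<alpha>) / 2 - \<alpha> * G i j \<alpha>)) \<longlongrightarrow>
      (2 / real CARD('n)) * ((nn * Lp$i$i + nn * Lp$j$j) / 2 - nn * Lp$i$j)) at_top"
    unfolding G_def
    by (intro tendsto_intros theta_lim[OF card] alpha_ln_lim F_lim) simp
  have "(2 / real CARD('n)) * ((nn * Lp$i$i + nn * Lp$j$j) / 2 - nn * Lp$i$j) = Lp$i$i + Lp$j$j - 2 * Lp$i$j"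
    using nn_pos by (simp add: nn_def field_simps)
  with Lim_transform_eventually[OF lim ev] show ?thesis
    unfolding has_long_walk_distance_def by simp
qed

definition "BC = (\<chi> i j. complex_of_real (B$i$j))"

lemma eig_bound: assumes "det (mat z - BC) = 0" shows "cmod z \<le> c"
proof -
  obtain v where v: "v \<noteq> 0" "(mat z - BC) *v v = 0" using ker_of_det0[OF assms] by blast
  define M where "M = Max (range (\<lambda>j. cmod (v$j)))"
  have "M \<in> range (\<lambda>j. cmod (v$j))" unfolding M_def by (intro Max_in) auto
  then obtain i where i: "cmod (v$i) = M" by auto
  have Mj: "cmod (v$j) \<le> cmod (v$i)" for j
  proof -
    have "cmod (v$j) \<le> M" unfolding M_def by (rule Max_ge) auto
    then show ?thesis using i by simp
  qed
  obtain k where "v$k \<noteq> 0" using v(1) by (auto simp: vec_eq_iff)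
  then have vi: "cmod (v$i) > 0" using Mj[of k] by (smt (verit) zero_less_norm_iff)
  have "((mat z - BC) *v v) $ i = 0" using v by simp
  then have "z * v$i = (\<Sum>j\<in>UNIV. BC$i$j * v$j)"
  proof -
    have "((mat z - BC) *v v) $ i = (mat z *v v)$i - (BC *v v)$i"
      by (simp add: matrix_vector_mult_diff_rdistrib)
    moreover have "(mat z *v v)$i = z * v$i"
    proof -
      have "(mat z *v v)$i = (\<Sum>j\<in>UNIV. (if i = j then z else 0) * v$j)"
        by (simp add: matrix_vector_mult_def mat_def)
      also have "\<dots> = (\<Sum>j\<in>UNIV. if i = j then z * v$j else 0)" by (rule sum.cong) auto
      finally show ?thesis by simp
    qed
    moreover have "(BC *v v)$i = (\<Sum>j\<in>UNIV. BC$i$j * v$j)" by (simp add: matrix_vector_mult_def)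
    ultimately show "((mat z - BC) *v v) $ i = 0 \<Longrightarrow> ?thesis" by simp
  qed
  then have "cmod z * cmod (v$i) = cmod (\<Sum>j\<in>UNIV. BC$i$j * v$j)" by (metis norm_mult)
  also have "\<dots> \<le> (\<Sum>j\<in>UNIV. cmod (BC$i$j * v$j))" by (rule norm_sum)
  also have "\<dots> = (\<Sum>j\<in>UNIV. B$i$j * cmod (v$j))"
    by (intro sum.cong refl) (simp add: BC_def norm_mult nonneg)
  also have "\<dots> \<le> (\<Sum>j\<in>UNIV. B$i$j * cmod (v$i))"
    by (intro sum_mono mult_left_mono Mj nonneg)
  also have "\<dots> = c * cmod (v$i)" by (simp add: rows sum_distrib_right[symmetric])
  finally show ?thesis using vi by simp
qed

lemma c_eig: "det (mat (complex_of_real c) - BC) = 0"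
proof (rule det0_of_ker)
  show "(1::complex^'n) \<noteq> 0" by (simp add: vec_eq_iff)
  have "((mat (complex_of_real c) - BC) *v 1) $ i = 0" for i
  proof -
    have "((mat (complex_of_real c) - BC) *v 1) $ i = (\<Sum>j\<in>UNIV. (if i = j then complex_of_real c else 0) - BC$i$j)"
      by (simp add: matrix_vector_mult_def mat_def)
    also have "\<dots> = (\<Sum>j\<in>UNIV. if i = j then complex_of_real c else 0) - (\<Sum>j\<in>UNIV. BC$i$j)"
      by (simp add: sum_subtractf)
    also have "(\<Sum>j\<in>UNIV. BC$i$j) = complex_of_real c"
    proof -
      have "complex_of_real (\<Sum>j\<in>UNIV. B$i$j) = (\<Sum>j\<in>UNIV. complex_of_real (B$i$j))" by (rule of_real_sum)
      then show ?thesis unfolding BC_def using rows[of i] by simp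
    qed
    finally show ?thesis by simp
  qed
  then show "(mat (complex_of_real c) - BC) *v 1 = 0" by (simp add: vec_eq_iff)
qed

lemma spec_rad: "spectral_radius B = c"
proof -
  define Q :: "complex poly^'n^'n" where "Q = (\<chi> i j. (if i = j then [:0,1:] else 0) - [:BC$i$j:])"
  have pQ: "poly (det Q) z = det (mat z - BC)" for z
  proof -
    have "(\<chi> i j. poly (Q$i$j) z) = mat z - BC" by (simp add: Q_def vec_eq_iff mat_def)
    then show ?thesis by (simp add: poly_det)
  qed
  have "det (mat (complex_of_real (c + 1)) - BC) \<noteq> 0"
    using eig_bound[of "complex_of_real (c+1)"] c_nonneg by auto
  then have "det Q \<noteq> 0" using pQ[of "complex_of_real (c+1)"] by auto
  then have fin: "finite {z. det (mat z - BC) = 0}" using poly_roots_finite[of "det Q"] by (simp add: pQ)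
  have S: "{cmod z | z. det (mat z - (\<chi> i j. complex_of_real (B $ i $ j))) = 0} = cmod ` {z. det (mat z - BC) = 0}"
    by (auto simp: BC_def)
  show ?thesis unfolding spectral_radius_def S
  proof (rule Max_eqI)
    show "finite (cmod ` {z. det (mat z - BC) = 0})" using fin by simp
    show "y \<le> c" if "y \<in> cmod ` {z. det (mat z - BC) = 0}" for y using that eig_bound by auto
    show "c \<in> cmod ` {z. det (mat z - BC) = 0}" using c_eig c_nonneg by (intro image_eqI[of _ _ "complex_of_real c"]) auto
  qed
qed

lemma resist: "(axis i 1 - axis j 1) \<bullet> (Lp *v (axis i 1 - axis j 1)) = Lp$i$i + Lp$j$j - 2 * Lp$i$j"
proof -
  have "(axis i 1 - axis j 1) \<bullet> (Lp *v (axis i 1 - axis j 1)) =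
     (Lp *v axis i 1)$i - (Lp *v axis j 1)$i - ((Lp *v axis i 1)$j - (Lp *v axis j 1)$j)"
    by (simp add: inner_diff_left inner_axis' matrix_vector_mult_diff_distrib)
  then show ?thesis using Lp_sym[of i j] by (simp add: ent)
qed

end

lemma lap_offdiag:
  fixes X Z :: "real^'n::finite^'n"
  assumes "\<And>i j. i \<noteq> j \<Longrightarrow> X$i$j = Z$i$j"
  shows "laplacian X = laplacian Z"
proof -
  have "laplacian X $ i $ j = laplacian Z $ i $ j" for i j
  proof (cases "i = j")
    case True
    have sx: "(\<Sum>k\<in>UNIV. X$i$k) = X$i$i + (\<Sum>k\<in>UNIV-{i}. X$i$k)" by (simp add: sum.remove)
    have sz: "(\<Sum>k\<in>UNIV. Z$i$k) = Z$i$i + (\<Sum>k\<in>UNIV-{i}. Z$i$k)" by (simp add: sum.remove)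
    have "(\<Sum>k\<in>UNIV-{i}. X$i$k) = (\<Sum>k\<in>UNIV-{i}. Z$i$k)" using assms by (intro sum.cong) auto
    then show ?thesis using True sx sz by (simp add: laplacian_def)
  next
    case False
    then show ?thesis using assms by (simp add: laplacian_def)
  qed
  then show ?thesis by (simp add: vec_eq_iff)
qed

theorem corollary7:
  fixes E E' :: "'e set" and ends ends' :: "'e \<Rightarrow> 'n::finite set" and w w' :: "'e \<Rightarrow> real"
  assumes "CARD('n) \<ge> 2"
    and "wmultigraph E ends w"
    and "wconnected E ends"
    and "balance_graph E ends w E' ends' w'"
  shows "\<forall>i j. has_long_walk_distance (wadj E' ends' w') i j
                 (resistance_distance (wadj E ends w) i j)"
proof -
  define A where "A = wadj E ends w"
  define B where "B = wadj E' ends' w'"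
  have G': "wmultigraph E' ends' w'" and sub: "E \<subseteq> E'"
    and agree: "\<And>e. e \<in> E \<Longrightarrow> ends' e = ends e \<and> w' e = w e"
    and lpedges: "\<And>e. e \<in> E' - E \<Longrightarrow> (\<exists>i. ends' e = {i}) \<and> w' e > 0"
    using assms(4) unfolding balance_graph_def by auto
  obtain c where rows: "\<And>i. (\<Sum>j\<in>UNIV. B$i$j) = c"
    using assms(4) unfolding balance_graph_def B_def by auto
  have finE': "finite E'" and posw': "\<And>e. e \<in> E' \<Longrightarrow> w' e > 0"
    using G' unfolding wmultigraph_def by auto
  have posw: "\<And>e. e \<in> E \<Longrightarrow> w e > 0" using assms(2) unfolding wmultigraph_def by auto
  have Bij: "B$i$j = (\<Sum>e\<in>{e\<in>E'. ends' e = {i, j}}. w' e)" for i j by (simp add: B_def wadj_def)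
  have symB: "B$i$j = B$j$i" for i j by (simp add: Bij insert_commute)
  have nonneg: "B$i$j \<ge> 0" for i j
    unfolding Bij by (intro sum_nonneg) (auto dest: posw' intro: less_imp_le)
  have Bpos: "B$a$b > 0" if "e \<in> E" "ends e = {a, b}" for a b e
  proof -
    have eE': "e \<in> {e\<in>E'. ends' e = {a, b}}" using that sub agree by auto
    have "w' e \<le> B$a$b" unfolding Bij
      by (rule member_le_sum[OF eE']) (use finE' posw' in \<open>auto intro: less_imp_le\<close>)
    moreover have "w' e > 0" using posw[OF that(1)] agree[OF that(1)] by simp
    ultimately show ?thesis by simp
  qed
  interpret balg B c
  proof
    show "B$i$j = B$j$i" for i j by (rule symB)
    show "B$i$j \<ge> 0" for i j by (rule nonneg)
    show "(\<Sum>j\<in>UNIV. B$i$j) = c" for i by (rule rows)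
    fix x :: "real^'n" and i j
    assume H: "\<And>i j. B$i$j > 0 \<Longrightarrow> x$i = x$j"
    have "(\<lambda>x y. \<exists>e\<in>E. ends e = {x, y})\<^sup>*\<^sup>* i j" using assms(3) unfolding wconnected_def by blast
    then show "x$i = x$j"
    proof (induction rule: rtranclp_induct)
      case base then show ?case by simp
    next
      case (step y z)
      then obtain e where "e \<in> E" "ends e = {y, z}" by blast
      then have "x$y = x$z" using H Bpos by blast
      with step show ?case by simp
    qed
  qed
  have offd: "A$i$j = B$i$j" if "i \<noteq> j" for i j
  proof -
    have key: "e \<in> E" if e: "e \<in> E'" "ends' e = {i, j}" for e
    proof (rule ccontr)
      assume "e \<notin> E"
      then obtain k where "ends' e = {k}" using lpedges e(1) by blast
      with e(2) have "{i, j} = {k}" by simp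
      then have "i = k" "j = k" by (auto simp: insert_eq_iff)
      with \<open>i \<noteq> j\<close> show False by simp
    qed
    have "{e\<in>E'. ends' e = {i, j}} = {e\<in>E. ends e = {i, j}}"
    proof (rule set_eqI, rule iffI)
      fix e assume "e \<in> {e\<in>E'. ends' e = {i, j}}"
      then have e: "e \<in> E'" "ends' e = {i, j}" by simp_all
      have eE: "e \<in> E" using key[OF e] .
      have "ends e = ends' e" using agree[OF eE] by simp
      then show "e \<in> {e\<in>E. ends e = {i, j}}" using eE e(2) by simp
    next
      fix e assume "e \<in> {e\<in>E. ends e = {i, j}}"
      then have e: "e \<in> E" "ends e = {i, j}" by simp_all
      have "ends' e = ends e" using agree[OF e(1)] by simp
      then show "e \<in> {e\<in>E'. ends' e = {i, j}}" using e sub by auto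
    qed
    then have "B$i$j = (\<Sum>e\<in>{e\<in>E. ends e = {i, j}}. w' e)" by (simp add: Bij)
    also have "\<dots> = (\<Sum>e\<in>{e\<in>E. ends e = {i, j}}. w e)" using agree by (intro sum.cong) auto
    finally show ?thesis by (simp add: A_def wadj_def)
  qed
  have lapB: "laplacian B = L"
  proof -
    have "laplacian B $ i $ j = L $ i $ j" for i j
      by (cases "i = j") (simp_all add: laplacian_def L_def mat_def rows)
    then show ?thesis by (simp add: vec_eq_iff)
  qed
  have lapA: "laplacian A = L" using lap_offdiag[of A B] offd lapB by simp
  show ?thesis
  proof (intro allI)
    fix i j
    have "resistance_distance A i j = Lp$i$i + Lp$j$j - 2 * Lp$i$j"
      unfolding resistance_distance_def lapA mp_Lp by (rule resist)
    then show "has_long_walk_distance (wadj E' ends' w') i j (resistance_distance (wadj E ends w) i j)"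
      using LW_main[OF spec_rad, of i j] by (simp add: A_def B_def)
  qed
qed

end
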